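(* Suppose $\lambda_1>0$ and $\beta$ satisfies condition $(E)$. Let $\varphi$ be an entire function and $C_\varphi f=f\circ\varphi$. Then $C_\varphi$ is a bounded operator from $\mathcal{H}(E,\beta)$ into itself if and only if $\varphi(z)=z+b$ for some $b\in\mathbb{C}$ with $\operatorname{Re}(b)\ge0$. Moreover, in that case the operator norm is $\|C_\varphi\|=e^{-\lambda_1\operatorname{Re}(b)}$.
   Context: Fix a sequence $\Lambda=(\lambda_n)_{n\ge1}$ of real numbers with $0\le\lambda_1<\lambda_2<\cdots$ and $\lambda_n\to+\infty$, such that $\limsup_{n\to\infty}\frac{\log n}{\lambda_n}<+\infty$. For a sequence $\beta=(\beta_n)$ of positive reals, condition $(E)$ is: $\liminf_{n\to\infty}\frac{\log\beta_n}{\lambda_n}=+\infty$. Under $(E)$, $\mathcal{H}(E,\beta)$ denotes the Hilbert space of entire functions $f(z)=\sum_{n=1}^\infty a_ne^{-\lambda_nz}$ ($a_n\in\mathbb{C}$; the representation is unique) with norm $\|f\|=\big(\sum_{n=1}^\infty|a_n|^2\beta_n^2\big)^{1/2}<\infty$. *)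

theory Defs
  imports "HOL-Analysis.Analysis"
begin

text \<open>Indexing convention: the paper's lambda_n, beta_n, a_n (n >= 1) are
  represented by lam (n-1), beta (n-1), a (n-1), i.e. sequences indexed from 0.\<close>

definition dirichlet_space :: "(nat \<Rightarrow> real) \<Rightarrow> (nat \<Rightarrow> real) \<Rightarrow> (complex \<Rightarrow> complex) set" where
  "dirichlet_space lam beta =
     {f. \<exists>a :: nat \<Rightarrow> complex.
           summable (\<lambda>n. (cmod (a n))\<^sup>2 * (beta n)\<^sup>2) \<and>
           (\<forall>z. (\<lambda>n. a n * exp (- of_real (lam n) * z)) sums f z)}"

definition dirichlet_coeffs :: "(nat \<Rightarrow> real) \<Rightarrow> (nat \<Rightarrow> real) \<Rightarrow> (complex \<Rightarrow> complex) \<Rightarrow> nat \<Rightarrow> complex" where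
  "dirichlet_coeffs lam beta f =
     (THE a. summable (\<lambda>n. (cmod (a n))\<^sup>2 * (beta n)\<^sup>2) \<and>
             (\<forall>z. (\<lambda>n. a n * exp (- of_real (lam n) * z)) sums f z))"

definition dirichlet_norm :: "(nat \<Rightarrow> real) \<Rightarrow> (nat \<Rightarrow> real) \<Rightarrow> (complex \<Rightarrow> complex) \<Rightarrow> real" where
  "dirichlet_norm lam beta f =
     sqrt (\<Sum>n. (cmod (dirichlet_coeffs lam beta f n))\<^sup>2 * (beta n)\<^sup>2)"

definition comp_bounded :: "(nat \<Rightarrow> real) \<Rightarrow> (nat \<Rightarrow> real) \<Rightarrow> (complex \<Rightarrow> complex) \<Rightarrow> bool" where
  "comp_bounded lam beta \<phi> \<longleftrightarrow>
     (\<forall>f \<in> dirichlet_space lam beta. f \<circ> \<phi> \<in> dirichlet_space lam beta) \<and>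
     (\<exists>M. \<forall>f \<in> dirichlet_space lam beta.
            dirichlet_norm lam beta (f \<circ> \<phi>) \<le> M * dirichlet_norm lam beta f)"

definition comp_opnorm :: "(nat \<Rightarrow> real) \<Rightarrow> (nat \<Rightarrow> real) \<Rightarrow> (complex \<Rightarrow> complex) \<Rightarrow> real" where
  "comp_opnorm lam beta \<phi> =
     Sup {dirichlet_norm lam beta (f \<circ> \<phi>) | f. f \<in> dirichlet_space lam beta \<and>
                                              dirichlet_norm lam beta f \<le> 1}"

end

theory Submission
  imports Defs "HOL-Complex_Analysis.Cauchy_Integral_Formula"
begin


lemma summ_S:
  fixes lam beta :: "nat \<Rightarrow> real"
  assumes lpos: "\<And>n. 0 < lam n" and bpos: "\<And>n. 0 < beta n"
    and lam_log: "limsup (\<lambda>n. ereal (ln (real (Suc n)) / lam n)) < \<infinity>"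
    and condE: "liminf (\<lambda>n. ereal (ln (beta n) / lam n)) = \<infinity>"
  shows "summable (\<lambda>n. exp (t * lam n) / (beta n)^2)"
proof -
  obtain C where C: "limsup (\<lambda>n. ereal (ln (real (Suc n)) / lam n)) < ereal C"
    using ereal_dense2[OF lam_log] by blast
  define D where "D = max C 1"
  have evC: "eventually (\<lambda>n. ln (real (Suc n)) / lam n < C) sequentially"
    using Limsup_lessD[OF C] by simp
  define A where "A = (t + 2 * D) / 2"
  have "ereal A < liminf (\<lambda>n. ereal (ln (beta n) / lam n))" using condE by simp
  from less_LiminfD[OF this] have evA: "eventually (\<lambda>n. A < ln (beta n) / lam n) sequentially"
    by simp
  have ev: "eventually (\<lambda>n. norm (exp (t * lam n) / (beta n)^2) \<le> inverse (real n ^ 2)) sequentially"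
    using evC evA eventually_gt_at_top[of "0::nat"]
  proof eventually_elim
    case (elim n)
    have l: "0 < lam n" by (rule lpos)
    have b: "0 < beta n" by (rule bpos)
    have c1: "ln (real (Suc n)) < D * lam n"
      using elim(1) l unfolding D_def
      by (smt (verit, ccfv_SIG) divide_less_eq mult_right_mono max.cobounded1)
    have c2: "A * lam n < ln (beta n)" using elim(2) l by (simp add: pos_less_divide_eq)
    have "exp (A * lam n) < beta n" using c2 b
      by (metis exp_less_cancel_iff exp_ln)
    then have "exp (A * lam n) ^ 2 < (beta n)^2"
      by (intro power_strict_mono) auto
    moreover have "exp (A * lam n) ^ 2 = exp (2 * (A * lam n))"
      by (subst exp_of_nat_mult[symmetric]) simp
    ultimately have bb: "exp (2 * (A * lam n)) < (beta n)^2" by simp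
    have "exp (t * lam n) / (beta n)^2 \<le> exp (t * lam n) / exp (2 * (A * lam n))"
      using bb b by (intro divide_left_mono) auto
    also have "\<dots> = exp (- (2 * D * lam n))"
      by (simp add: A_def exp_diff[symmetric] algebra_simps)
    also have "\<dots> \<le> exp (- (2 * ln (real (Suc n))))" using c1 by simp
    also have "\<dots> = inverse (exp (ln (real (Suc n))) ^ 2)"
      by (subst exp_of_nat_mult[symmetric]) (simp add: exp_minus)
    also have "\<dots> = inverse (real (Suc n) ^ 2)" by simp
    also have "\<dots> \<le> inverse (real n ^ 2)" using elim(3)
      by (intro le_imp_inverse_le power_mono) auto
    finally show ?case by simp
  qed
  show ?thesis
    by (rule summable_comparison_test_ev[OF ev inverse_power_summable[of 2]]) simp
qed

lemma amgm:
  fixes p q s :: real assumes "0 < s"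
  shows "p * q \<le> (s * p^2 + q^2 / s) / 2"
proof -
  have "0 \<le> (s * p - q)^2 / s" using assms by simp
  also have "(s * p - q)^2 / s = s * p^2 + q^2 / s - 2 * (p * q)"
    using assms by (simp add: power2_eq_square field_simps)
  finally show ?thesis by simp
qed

locale dset =
  fixes lam beta :: "nat \<Rightarrow> real"
  assumes lpos: "\<And>n. 0 < lam n" and lmono: "strict_mono lam" and bpos: "\<And>n. 0 < beta n"
    and summ: "\<And>t. summable (\<lambda>n. exp (t * lam n) / (beta n)^2)"
begin

definition W :: "(nat \<Rightarrow> complex) \<Rightarrow> nat \<Rightarrow> real" where
  "W a = (\<lambda>n. (cmod (a n))\<^sup>2 * (beta n)\<^sup>2)"

definition S :: "real \<Rightarrow> real" where
  "S t = (\<Sum>n. exp (t * lam n) / (beta n)^2)"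

definition rep :: "(nat \<Rightarrow> complex) \<Rightarrow> (complex \<Rightarrow> complex) \<Rightarrow> bool" where
  "rep a f \<longleftrightarrow> summable (W a) \<and> (\<forall>z. (\<lambda>n. a n * exp (- of_real (lam n) * z)) sums f z)"

lemma lam_le: "m \<le> n \<Longrightarrow> lam m \<le> lam n"
  using lmono strict_mono_less_eq by blast

lemma S_pos: "0 < S t"
  unfolding S_def
proof (rule suminf_pos[OF summ])
  fix n have "0 < (beta n)^2" using bpos[of n] by simp
  then show "0 < exp (t * lam n) / (beta n)^2" by simp
qed

lemma W_nonneg: "0 \<le> W a n" unfolding W_def by simp

lemma norm_term: "cmod (a * exp (- of_real (lam n) * z)) = cmod a * exp (- lam n * Re z)"
  by (simp add: norm_mult norm_exp_eq_Re)

lemma abs_summ: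
  assumes "summable (W a)"
  shows "summable (\<lambda>n. cmod (a n) * exp (- t * lam n))"
proof (rule summable_comparison_test[where g="\<lambda>n. (W a n + exp ((-2*t) * lam n) / (beta n)^2) / 2"])
  show "summable (\<lambda>n. (W a n + exp ((-2*t) * lam n) / (beta n)^2) / 2)"
    by (intro summable_divide summable_add assms summ)
  show "\<exists>N. \<forall>n\<ge>N. norm (cmod (a n) * exp (- t * lam n)) \<le> (W a n + exp ((-2*t) * lam n) / (beta n)^2) / 2"
  proof (intro exI allI impI)
    fix n
    have b: "0 < beta n" by (rule bpos)
    have e: "exp ((-2*t) * lam n) = exp (- t * lam n) ^ 2"
      by (subst exp_of_nat_mult[symmetric]) simp
    have "cmod (a n) * exp (- t * lam n) = (cmod (a n) * beta n) * (exp (- t * lam n) / beta n)"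
      using b by simp
    also have "\<dots> \<le> (1 * (cmod (a n) * beta n)^2 + (exp (- t * lam n) / beta n)^2 / 1) / 2"
      by (rule amgm) simp
    also have "\<dots> = (W a n + exp ((-2*t) * lam n) / (beta n)^2) / 2"
      unfolding W_def e by (simp add: power_mult_distrib power_divide)
    finally show "norm (cmod (a n) * exp (- t * lam n)) \<le> (W a n + exp ((-2*t) * lam n) / (beta n)^2) / 2"
      by simp
  qed
qed


lemma pt_bound:
  assumes sw: "summable (W a)" and sm: "(\<lambda>n. a n * exp (- of_real (lam n) * z)) sums F"
  shows "cmod F \<le> sqrt (suminf (W a)) * sqrt (S (-2 * Re z))"
proof -
  define N where "N = suminf (W a)"
  define K where "K = S (-2 * Re z)"
  have N0: "0 \<le> N" unfolding N_def using sw W_nonneg by (intro suminf_nonneg) auto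
  have K0: "0 < K" unfolding K_def by (rule S_pos)
  have asum: "summable (\<lambda>n. cmod (a n) * exp (- Re z * lam n))" by (rule abs_summ[OF sw])
  have nt: "(\<lambda>n. norm (a n * exp (- of_real (lam n) * z))) = (\<lambda>n. cmod (a n) * exp (- Re z * lam n))"
    unfolding norm_term by (simp add: mult.commute)
  have F: "F = suminf (\<lambda>n. a n * exp (- of_real (lam n) * z))" using sm by (simp add: sums_unique)
  have Fle: "cmod F \<le> (\<Sum>n. cmod (a n) * exp (- Re z * lam n))"
    unfolding F using summable_norm[of "\<lambda>n. a n * exp (- of_real (lam n) * z)"] asum nt by simp
  show ?thesis
  proof (cases "N = 0")
    case True
    have "\<And>n. W a n = 0" using suminf_eq_zero_iff[OF sw W_nonneg] True N_def by simp
    then have "\<And>n. a n = 0" unfolding W_def using bpos by (metis mult_eq_0_iff norm_eq_zero power_eq_0_iff less_irrefl)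
    then have "F = 0" using F by simp
    then show ?thesis using N0 K0 unfolding N_def K_def by simp
  next
    case False
    then have Np: "0 < N" using N0 by simp
    define s where "s = sqrt K / sqrt N"
    have sp: "0 < s" unfolding s_def using Np K0 by simp
    have tb: "cmod (a n) * exp (- Re z * lam n) \<le> (s * W a n + exp ((-2 * Re z) * lam n) / (beta n)^2 / s) / 2" for n
    proof -
      have b: "0 < beta n" by (rule bpos)
      have e: "exp ((-2 * Re z) * lam n) = exp (- Re z * lam n) ^ 2"
        by (subst exp_of_nat_mult[symmetric]) simp
      have "cmod (a n) * exp (- Re z * lam n) = (cmod (a n) * beta n) * (exp (- Re z * lam n) / beta n)"
        using b by simp
      also have "\<dots> \<le> (s * (cmod (a n) * beta n)^2 + (exp (- Re z * lam n) / beta n)^2 / s) / 2"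
        by (rule amgm[OF sp])
      also have "\<dots> = (s * W a n + exp ((-2 * Re z) * lam n) / (beta n)^2 / s) / 2"
        unfolding W_def e by (simp add: power_mult_distrib power_divide)
      finally show ?thesis .
    qed
    have s2: "summable (\<lambda>n. (s * W a n + exp ((-2 * Re z) * lam n) / (beta n)^2 / s) / 2)"
      by (intro summable_divide summable_add summable_mult sw summ)
    have "(\<Sum>n. cmod (a n) * exp (- Re z * lam n)) \<le> (\<Sum>n. (s * W a n + exp ((-2 * Re z) * lam n) / (beta n)^2 / s) / 2)"
      by (rule suminf_le[OF tb asum s2])
    also have "\<dots> = (s * N + K / s) / 2"
    proof -
      have "(\<lambda>n. (s * W a n + exp ((-2 * Re z) * lam n) / (beta n)^2 / s) / 2) sums ((s * N + K / s) / 2)"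
        unfolding N_def K_def S_def
        by (intro sums_divide sums_add sums_mult summable_sums sw summ)
      then show ?thesis by (rule sums_unique[symmetric])
    qed
    also have "\<dots> = sqrt N * sqrt K"
      unfolding s_def using Np K0
      by (simp add: field_simps)
    finally show ?thesis using Fle unfolding N_def K_def by simp
  qed
qed


lemma zero_coeffs:
  assumes sw: "summable (W d)"
    and z: "\<And>t::real. 0 \<le> t \<Longrightarrow> (\<lambda>n. d n * exp (- of_real (lam n) * of_real t)) sums 0"
  shows "d m = 0"
proof (induction m rule: less_induct)
  case (less m)
  have sd: "summable (\<lambda>n. cmod (d n))" using abs_summ[OF sw, of 0] by simp
  define A where "A = (\<Sum>n. cmod (d (n + Suc m)))"
  have sdA: "summable (\<lambda>n. cmod (d (n + Suc m)))"
    using summable_ignore_initial_segment[OF sd, of "Suc m"] by simp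
  define \<delta> where "\<delta> = lam (Suc m) - lam m"
  have dpos: "0 < \<delta>" unfolding \<delta>_def using lmono by (simp add: strict_mono_def)
  have bound: "cmod (d m) \<le> A * exp (- \<delta> * t)" if t0: "0 \<le> t" for t
  proof -
    define g where "g = (\<lambda>n. d n * exp (- of_real (lam n) * of_real t))"
    have gs: "g sums 0" unfolding g_def by (rule z[OF t0])
    have "(\<lambda>i. g (i + Suc m)) sums (0 - sum g {..<Suc m})"
      by (rule sums_split_initial_segment[OF gs])
    moreover have "sum g {..<Suc m} = g m"
      using less by (simp add: g_def)
    ultimately have gs2: "(\<lambda>i. g (i + Suc m)) sums (- g m)" by simp
    have ng: "norm (g n) = cmod (d n) * exp (- lam n * t)" for n
      unfolding g_def by (simp add: norm_mult norm_exp_eq_Re)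
    have le1: "norm (g (i + Suc m)) \<le> cmod (d (i + Suc m)) * exp (- lam (Suc m) * t)" for i
    proof -
      have "lam (Suc m) \<le> lam (i + Suc m)" by (rule lam_le) simp
      then have "exp (- lam (i + Suc m) * t) \<le> exp (- lam (Suc m) * t)"
        using t0 by (simp add: mult_right_mono)
      then show ?thesis unfolding ng by (simp add: mult_left_mono)
    qed
    have s3: "summable (\<lambda>i. cmod (d (i + Suc m)) * exp (- lam (Suc m) * t))"
      by (intro summable_mult2 sdA)
    have s4: "summable (\<lambda>i. norm (g (i + Suc m)))"
      by (rule summable_comparison_test[OF _ s3]) (use le1 in auto)
    have "norm (g m) = norm (suminf (\<lambda>i. g (i + Suc m)))"
      using gs2 sums_unique by (metis norm_minus_cancel)
    also have "\<dots> \<le> (\<Sum>i. norm (g (i + Suc m)))" by (rule summable_norm[OF s4])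
    also have "\<dots> \<le> (\<Sum>i. cmod (d (i + Suc m)) * exp (- lam (Suc m) * t))"
      by (rule suminf_le[OF le1 s4 s3])
    also have "\<dots> = A * exp (- lam (Suc m) * t)"
      unfolding A_def by (rule suminf_mult2[OF sdA, symmetric])
    finally have "cmod (d m) * exp (- lam m * t) \<le> A * exp (- lam (Suc m) * t)"
      by (simp add: ng)
    then have "cmod (d m) \<le> A * exp (- lam (Suc m) * t) / exp (- lam m * t)"
      by (simp add: pos_le_divide_eq)
    also have "\<dots> = A * exp (- \<delta> * t)"
      unfolding \<delta>_def by (simp add: exp_diff exp_minus field_simps)
    finally show ?thesis .
  qed
  have lim: "((\<lambda>t. A * exp (- \<delta> * t)) \<longlongrightarrow> 0) at_top"
    using dpos by (intro tendsto_mult_right_zero filterlim_compose[OF exp_at_bot] filterlim_tendsto_neg_mult_at_bot[OF tendsto_const] filterlim_ident) (auto)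
  have "cmod (d m) \<le> 0"
    by (rule tendsto_le[OF trivial_limit_at_top_linorder lim tendsto_const])
       (use bound in \<open>auto intro!: eventually_at_top_linorderI[of 0]\<close>)
  then show ?case by simp
qed

lemma uniq:
  assumes "rep a f" "rep a' f"
  shows "a = a'"
proof
  fix m
  define d where "d = (\<lambda>n. a n - a' n)"
  have s1: "summable (W a)" "summable (W a')" using assms unfolding rep_def by auto
  have "W d n \<le> 2 * W a n + 2 * W a' n" for n
  proof -
    have "cmod (d n) \<le> cmod (a n) + cmod (a' n)" unfolding d_def by (rule norm_triangle_ineq4)
    then have "(cmod (d n))^2 \<le> (cmod (a n) + cmod (a' n))^2" by (simp add: power_mono)
    also have "\<dots> \<le> 2 * (cmod (a n))^2 + 2 * (cmod (a' n))^2"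
      by (smt (verit) sum_squares_bound power2_sum zero_le_power2)
    finally have "(cmod (d n))^2 * (beta n)^2 \<le> (2 * (cmod (a n))^2 + 2 * (cmod (a' n))^2) * (beta n)^2"
      by (simp add: mult_right_mono)
    then show ?thesis unfolding W_def by (simp add: algebra_simps)
  qed
  then have swd: "summable (W d)"
    by (intro summable_comparison_test[OF _ summable_add[OF summable_mult[OF s1(1)] summable_mult[OF s1(2)]]])
       (auto simp: W_nonneg)
  have "(\<lambda>n. d n * exp (- of_real (lam n) * of_real t)) sums 0" for t :: real
  proof -
    have "(\<lambda>n. a n * exp (- of_real (lam n) * of_real t) - a' n * exp (- of_real (lam n) * of_real t)) sums (f t - f t)"
      using assms unfolding rep_def by (intro sums_diff) auto
    then show ?thesis unfolding d_def by (simp add: algebra_simps)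
  qed
  then have "d m = 0" using zero_coeffs[OF swd] by blast
  then show "a m = a' m" unfolding d_def by simp
qed

lemma coeffs_eq: "rep a f \<Longrightarrow> dirichlet_coeffs lam beta f = a"
  unfolding dirichlet_coeffs_def
  by (rule the_equality) (use uniq in \<open>auto simp: rep_def W_def\<close>)

lemma norm_eq: "rep a f \<Longrightarrow> dirichlet_norm lam beta f = sqrt (suminf (W a))"
  unfolding dirichlet_norm_def using coeffs_eq by (simp add: W_def)

lemma space_iff: "f \<in> dirichlet_space lam beta \<longleftrightarrow> (\<exists>a. rep a f)"
  unfolding dirichlet_space_def rep_def W_def by auto


lemma rep_single: "rep (\<lambda>n. if n = k then c else 0) (\<lambda>z. c * exp (- of_real (lam k) * z))"
  unfolding rep_def
proof
  have "W (\<lambda>n. if n = k then c else 0) = (\<lambda>n. if n = k then W (\<lambda>_. c) k else 0)"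
    unfolding W_def by auto
  then show "summable (W (\<lambda>n. if n = k then c else 0))"
    using sums_single[of k "\<lambda>_. W (\<lambda>_. c) k"] sums_summable by metis
  show "\<forall>z. (\<lambda>n. (if n = k then c else 0) * exp (- complex_of_real (lam n) * z)) sums (c * exp (- complex_of_real (lam k) * z))"
  proof
    fix z
    have "(\<lambda>n. (if n = k then c else 0) * exp (- complex_of_real (lam n) * z)) =
          (\<lambda>n. if n = k then c * exp (- complex_of_real (lam n) * z) else 0)" by auto
    then show "(\<lambda>n. (if n = k then c else 0) * exp (- complex_of_real (lam n) * z)) sums (c * exp (- complex_of_real (lam k) * z))"
      using sums_single[of k "\<lambda>n. c * exp (- complex_of_real (lam n) * z)"] by simp
  qed
qed

lemma norm_single: "dirichlet_norm lam beta (\<lambda>z. c * exp (- of_real (lam k) * z)) = cmod c * beta k"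
proof -
  have "W (\<lambda>n. if n = k then c else 0) = (\<lambda>n. if n = k then W (\<lambda>_. c) k else 0)"
    unfolding W_def by auto
  then have "suminf (W (\<lambda>n. if n = k then c else 0)) = (cmod c)^2 * (beta k)^2"
    using sums_single[of k "\<lambda>_. W (\<lambda>_. c) k"] sums_unique unfolding W_def by metis
  then show ?thesis using norm_eq[OF rep_single] bpos[of k]
    by (simp add: real_sqrt_mult)
qed

definition kc :: "complex \<Rightarrow> nat \<Rightarrow> complex" where
  "kc w = (\<lambda>n. exp (- of_real (lam n) * cnj w) / of_real ((beta n)^2))"

definition kf :: "complex \<Rightarrow> complex \<Rightarrow> complex" where
  "kf w = (\<lambda>z. \<Sum>n. kc w n * exp (- of_real (lam n) * z))"

lemma W_kc: "W (kc w) = (\<lambda>n. exp ((-2 * Re w) * lam n) / (beta n)^2)"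
proof
  fix n
  have b: "0 < beta n" by (rule bpos)
  have e: "exp ((-2 * Re w) * lam n) = exp (- lam n * Re w) ^ 2"
    by (subst exp_of_nat_mult[symmetric]) (simp add: algebra_simps)
  have "cmod (kc w n) = exp (- lam n * Re w) / (beta n)^2"
    unfolding kc_def by (simp add: norm_divide norm_exp_eq_Re norm_power)
  moreover have "(exp (- lam n * Re w) / (beta n)^2)^2 * (beta n)^2 = exp (- lam n * Re w)^2 / (beta n)^2"
    using b by (simp add: power2_eq_square field_simps)
  ultimately show "W (kc w) n = exp ((-2 * Re w) * lam n) / (beta n)^2"
    unfolding W_def e by simp
qed

lemma rep_kf: "rep (kc w) (kf w)"
  unfolding rep_def
proof
  show "summable (W (kc w))" unfolding W_kc by (rule summ)
  show "\<forall>z. (\<lambda>n. kc w n * exp (- complex_of_real (lam n) * z)) sums kf w z"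
  proof
    fix z
    have nrm: "norm (kc w n * exp (- complex_of_real (lam n) * z)) = exp ((- (Re w + Re z)) * lam n) / (beta n)^2" for n
      unfolding kc_def by (simp add: norm_mult norm_divide norm_exp_eq_Re norm_power exp_add[symmetric] algebra_simps)
    have "summable (\<lambda>n. norm (kc w n * exp (- complex_of_real (lam n) * z)))"
      unfolding nrm by (rule summ)
    then show "(\<lambda>n. kc w n * exp (- complex_of_real (lam n) * z)) sums kf w z"
      unfolding kf_def by (rule summable_sums[OF summable_norm_cancel])
  qed
qed

lemma kf_at: "kf w w = of_real (S (-2 * Re w))"
proof -
  have "kc w n * exp (- of_real (lam n) * w) = of_real (exp ((-2 * Re w) * lam n) / (beta n)^2)" for n
  proof -
    have "kc w n * exp (- of_real (lam n) * w) = exp (- of_real (lam n) * (cnj w + w)) / of_real ((beta n)^2)"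
      unfolding kc_def by (simp add: exp_add[symmetric] algebra_simps)
    also have "cnj w + w = of_real (2 * Re w)" using complex_add_cnj[of w] by (simp add: add.commute)
    finally show ?thesis by (simp flip: exp_of_real add: algebra_simps)
  qed
  then have "kf w w = (\<Sum>n. of_real (exp ((-2 * Re w) * lam n) / (beta n)^2))"
    unfolding kf_def by simp
  also have "\<dots> = of_real (S (-2 * Re w))"
    unfolding S_def by (rule suminf_of_real[OF summ, symmetric])
  finally show ?thesis .
qed

lemma norm_kf: "dirichlet_norm lam beta (kf w) = sqrt (S (-2 * Re w))"
  using norm_eq[OF rep_kf] unfolding W_kc S_def by simp

lemma rep_shift:
  assumes "rep a f" "0 \<le> Re b"
  shows "rep (\<lambda>n. a n * exp (- of_real (lam n) * b)) (f \<circ> (\<lambda>z. z + b))"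
    and "suminf (W (\<lambda>n. a n * exp (- of_real (lam n) * b))) \<le> exp (- lam 0 * Re b)^2 * suminf (W a)"
proof -
  have sw: "summable (W a)" using assms unfolding rep_def by auto
  have Wle: "W (\<lambda>n. a n * exp (- of_real (lam n) * b)) n \<le> exp (- lam 0 * Re b)^2 * W a n" for n
  proof -
    have "exp (- lam n * Re b) \<le> exp (- lam 0 * Re b)"
      using lam_le[of 0 n] assms(2) by (simp add: mult_right_mono)
    then have "exp (- lam n * Re b)^2 \<le> exp (- lam 0 * Re b)^2" by (simp add: power_mono)
    then show ?thesis unfolding W_def
      by (simp add: norm_mult norm_exp_eq_Re power_mult_distrib mult_left_mono mult_right_mono algebra_simps)
  qed
  have sw2: "summable (W (\<lambda>n. a n * exp (- of_real (lam n) * b)))"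
    by (rule summable_comparison_test[OF _ summable_mult[OF sw]]) (use Wle W_nonneg in auto)
  show "suminf (W (\<lambda>n. a n * exp (- of_real (lam n) * b))) \<le> exp (- lam 0 * Re b)^2 * suminf (W a)"
    using suminf_le[OF Wle sw2 summable_mult[OF sw]] suminf_mult[OF sw] by simp
  show "rep (\<lambda>n. a n * exp (- of_real (lam n) * b)) (f \<circ> (\<lambda>z. z + b))"
    unfolding rep_def
  proof (intro conjI sw2 allI)
    fix z
    have "(\<lambda>n. a n * exp (- of_real (lam n) * (z + b))) sums f (z + b)" using assms unfolding rep_def by auto
    moreover have "(\<lambda>n. a n * exp (- of_real (lam n) * b) * exp (- of_real (lam n) * z)) = (\<lambda>n. a n * exp (- of_real (lam n) * (z + b)))"
      by (rule ext) (simp add: exp_add[symmetric] algebra_simps)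
    ultimately show "(\<lambda>n. a n * exp (- of_real (lam n) * b) * exp (- of_real (lam n) * z)) sums (f \<circ> (\<lambda>z. z + b)) z"
      by simp
  qed
qed


lemma fwd:
  assumes rb: "0 \<le> Re b"
  shows "comp_bounded lam beta (\<lambda>z. z + b) \<and> comp_opnorm lam beta (\<lambda>z. z + b) = exp (- lam 0 * Re b)"
proof -
  define E where "E = exp (- lam 0 * Re b)"
  have Ep: "0 < E" unfolding E_def by simp
  have bnd: "f \<circ> (\<lambda>z. z + b) \<in> dirichlet_space lam beta \<and>
             dirichlet_norm lam beta (f \<circ> (\<lambda>z. z + b)) \<le> E * dirichlet_norm lam beta f"
    if fin: "f \<in> dirichlet_space lam beta" for f
  proof -
    obtain a where ra: "rep a f" using fin space_iff by blast
    note rs = rep_shift[OF ra rb]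
    have "dirichlet_norm lam beta (f \<circ> (\<lambda>z. z + b)) = sqrt (suminf (W (\<lambda>n. a n * exp (- of_real (lam n) * b))))"
      by (rule norm_eq[OF rs(1)])
    also have "\<dots> \<le> sqrt (E^2 * suminf (W a))" unfolding E_def using rs(2) by simp
    also have "\<dots> = E * dirichlet_norm lam beta f"
      using norm_eq[OF ra] Ep by (simp add: real_sqrt_mult)
    finally show ?thesis using rs(1) space_iff by blast
  qed
  have cb: "comp_bounded lam beta (\<lambda>z. z + b)"
    unfolding comp_bounded_def using bnd by blast
  define f0 where "f0 = (\<lambda>z. complex_of_real (1 / beta 0) * exp (- of_real (lam 0) * z))"
  have f0in: "f0 \<in> dirichlet_space lam beta" unfolding f0_def using rep_single space_iff by blast
  have nf0: "dirichlet_norm lam beta f0 = 1" unfolding f0_def norm_single using bpos[of 0] by (simp add: norm_divide)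
  have f0s: "f0 \<circ> (\<lambda>z. z + b) = (\<lambda>z. (complex_of_real (1 / beta 0) * exp (- of_real (lam 0) * b)) * exp (- of_real (lam 0) * z))"
    unfolding f0_def by (rule ext) (simp add: exp_add[symmetric] algebra_simps)
  have nf0s: "dirichlet_norm lam beta (f0 \<circ> (\<lambda>z. z + b)) = E"
    unfolding f0s norm_single E_def using bpos[of 0] by (simp add: norm_mult norm_divide norm_exp_eq_Re)
  have "comp_opnorm lam beta (\<lambda>z. z + b) = E"
    unfolding comp_opnorm_def
  proof (rule cSup_eq_maximum)
    show "E \<in> {dirichlet_norm lam beta (f \<circ> (\<lambda>z. z + b)) |f. f \<in> dirichlet_space lam beta \<and> dirichlet_norm lam beta f \<le> 1}"
      using f0in nf0 nf0s by force
    fix x assume "x \<in> {dirichlet_norm lam beta (f \<circ> (\<lambda>z. z + b)) |f. f \<in> dirichlet_space lam beta \<and> dirichlet_norm lam beta f \<le> 1}"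
    then obtain f where "f \<in> dirichlet_space lam beta" "dirichlet_norm lam beta f \<le> 1"
      and x: "x = dirichlet_norm lam beta (f \<circ> (\<lambda>z. z + b))" by blast
    then have "x \<le> E * dirichlet_norm lam beta f" using bnd by blast
    also have "\<dots> \<le> E * 1" using \<open>dirichlet_norm lam beta f \<le> 1\<close> Ep by (intro mult_left_mono) auto
    finally show "x \<le> E" by simp
  qed
  then show ?thesis using cb unfolding E_def by simp
qed


lemma lower:
  assumes cb: "comp_bounded lam beta \<phi>"
  shows "\<exists>C. \<forall>z. - C \<le> Re (\<phi> z - z)"
proof -
  have inS: "\<And>f. f \<in> dirichlet_space lam beta \<Longrightarrow> f \<circ> \<phi> \<in> dirichlet_space lam beta"
    using cb unfolding comp_bounded_def by blast
  obtain M where Mb: "\<And>f. f \<in> dirichlet_space lam beta \<Longrightarrow>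
      dirichlet_norm lam beta (f \<circ> \<phi>) \<le> M * dirichlet_norm lam beta f"
    using cb unfolding comp_bounded_def by blast
  have "- (\<bar>ln M\<bar> / lam 0) \<le> Re (\<phi> z - z)" for z
  proof -
    define w where "w = \<phi> z"
    define u where "u = Re w"
    define x where "x = Re z"
    have kin: "kf w \<in> dirichlet_space lam beta" using rep_kf space_iff by blast
    obtain c where rc: "rep c (kf w \<circ> \<phi>)" using inS[OF kin] space_iff by blast
    have n2: "sqrt (suminf (W c)) \<le> M * sqrt (S (-2 * u))"
      using Mb[OF kin] norm_eq[OF rc] norm_kf u_def by simp
    have pb: "cmod ((kf w \<circ> \<phi>) z) \<le> sqrt (suminf (W c)) * sqrt (S (-2 * x))"
      using rc unfolding rep_def x_def by (intro pt_bound) auto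
    have Fz: "(kf w \<circ> \<phi>) z = of_real (S (-2 * u))" using kf_at w_def u_def by simp
    define A where "A = sqrt (S (-2 * u))"
    define B where "B = sqrt (S (-2 * x))"
    have Ap: "0 < A" "0 < B" unfolding A_def B_def using S_pos by auto
    have "A * A = S (-2 * u)" unfolding A_def using S_pos[of "-2*u"] by simp
    also have "\<dots> = cmod ((kf w \<circ> \<phi>) z)" using Fz S_pos[of "-2*u"] by simp
    also have "\<dots> \<le> sqrt (suminf (W c)) * B" using pb B_def by simp
    also have "\<dots> \<le> M * A * B" using n2 Ap unfolding A_def by (intro mult_right_mono) auto
    finally have "A * A \<le> (M * B) * A" by (simp add: algebra_simps)
    then have AMB: "A \<le> M * B" using Ap by simp
    show ?thesis
    proof (cases "u \<le> x")
      case False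
      have "0 \<le> \<bar>ln M\<bar> / lam 0" using lpos[of 0] by simp
      then show ?thesis using False w_def u_def x_def by simp
    next
      case True
      define y where "y = lam 0 * (x - u)"
      have tl: "exp (2 * y) * (exp ((-2 * x) * lam n) / (beta n)^2) \<le> exp ((-2 * u) * lam n) / (beta n)^2" for n
      proof -
        have "lam 0 * (x - u) \<le> lam n * (x - u)" using lam_le[of 0 n] True by (simp add: mult_right_mono)
        then have "exp (2 * y) \<le> exp (2 * (lam n * (x - u)))" unfolding y_def by simp
        then have "exp (2 * y) * exp ((-2 * x) * lam n) \<le> exp (2 * (lam n * (x - u))) * exp ((-2 * x) * lam n)"
          by (simp add: mult_right_mono)
        also have "\<dots> = exp ((-2 * u) * lam n)" by (simp add: exp_add[symmetric] algebra_simps)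
        finally show ?thesis by (simp add: divide_right_mono)
      qed
      have "exp (2 * y) * S (-2 * x) = (\<Sum>n. exp (2 * y) * (exp ((-2 * x) * lam n) / (beta n)^2))"
        unfolding S_def by (rule suminf_mult[OF summ, symmetric])
      also have "\<dots> \<le> S (-2 * u)"
        unfolding S_def by (rule suminf_le[OF tl summable_mult[OF summ] summ])
      finally have "exp (2 * y) * S (-2 * x) \<le> S (-2 * u)" .
      then have "sqrt (exp (2 * y) * S (-2 * x)) \<le> A" unfolding A_def by simp
      moreover have "sqrt (exp (2 * y) * S (-2 * x)) = exp y * B"
      proof -
        have "exp (2 * y) = exp y ^ 2" by (subst exp_of_nat_mult[symmetric]) simp
        then show ?thesis unfolding B_def by (simp add: real_sqrt_mult)
      qed
      ultimately have "exp y * B \<le> M * B" using AMB by simp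
      then have ey: "exp y \<le> M" using Ap by simp
      then have Mp: "0 < M" using exp_gt_zero[of y] by linarith
      have "y \<le> ln M" using ey Mp by (metis exp_le_cancel_iff exp_ln)
      then have "x - u \<le> ln M / lam 0" unfolding y_def using lpos[of 0]
        by (simp add: pos_le_divide_eq mult.commute)
      then show ?thesis using w_def u_def x_def lpos[of 0]
        by (smt (verit, ccfv_SIG) abs_ge_self divide_right_mono minus_complex.sel(1))
    qed
  qed
  then show ?thesis by blast
qed

lemma reb:
  fixes b :: complex
  assumes cb: "comp_bounded lam beta (\<lambda>z. z + b)" and li: "filterlim lam at_top sequentially"
  shows "0 \<le> Re b"
proof (rule ccontr)
  assume nb: "\<not> 0 \<le> Re b"
  obtain M where Mb: "\<And>f. f \<in> dirichlet_space lam beta \<Longrightarrow>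
      dirichlet_norm lam beta (f \<circ> (\<lambda>z. z + b)) \<le> M * dirichlet_norm lam beta f"
    using cb unfolding comp_bounded_def by blast
  have ek: "exp (- lam k * Re b) \<le> M" for k
  proof -
    define f :: "complex \<Rightarrow> complex" where "f = (\<lambda>z. 1 * exp (- of_real (lam k) * z))"
    have fin: "f \<in> dirichlet_space lam beta" unfolding f_def using rep_single space_iff by blast
    have fs: "f \<circ> (\<lambda>z. z + b) = (\<lambda>z. exp (- of_real (lam k) * b) * exp (- of_real (lam k) * z))"
      unfolding f_def by (rule ext) (simp add: exp_add[symmetric] algebra_simps)
    have n1: "dirichlet_norm lam beta (f \<circ> (\<lambda>z. z + b)) = exp (- lam k * Re b) * beta k"
      unfolding fs norm_single by (simp add: norm_exp_eq_Re)
    have n2: "dirichlet_norm lam beta f = beta k"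
      unfolding f_def norm_single by simp
    have "exp (- lam k * Re b) * beta k \<le> M * beta k"
      using Mb[OF fin] unfolding n1 n2 .
    then show ?thesis using bpos[of k] by simp
  qed
  define Z where "Z = (M - 1) / (- Re b) + 1"
  have "eventually (\<lambda>k. Z \<le> lam k) sequentially" using li by (simp add: filterlim_at_top)
  then obtain k where k: "Z \<le> lam k" by (meson eventually_sequentially order_refl)
  have rb: "0 < - Re b" using nb by simp
  have "M - 1 < lam k * (- Re b)"
  proof -
    have "(M - 1) / (- Re b) < lam k" using k unfolding Z_def by simp
    then show ?thesis using pos_divide_less_eq[OF rb] by blast
  qed
  moreover have "1 + lam k * (- Re b) \<le> exp (- lam k * Re b)"
    using exp_ge_add_one_self[of "lam k * (- Re b)"] by simp
  ultimately show False using ek[of k] by simp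
qed

end

theorem theorem4p5:
  fixes lam beta :: "nat \<Rightarrow> real" and \<phi> :: "complex \<Rightarrow> complex"
  assumes lam_nonneg: "0 \<le> lam 0"
    and lam_mono: "strict_mono lam"
    and lam_inf: "filterlim lam at_top sequentially"
    and lam_log: "limsup (\<lambda>n. ereal (ln (real (Suc n)) / lam n)) < \<infinity>"
    and beta_pos: "\<forall>n. 0 < beta n"
    and condE: "liminf (\<lambda>n. ereal (ln (beta n) / lam n)) = \<infinity>"
    and lam1_pos: "0 < lam 0"
    and entire: "\<phi> holomorphic_on UNIV"
  shows "(comp_bounded lam beta \<phi> \<longleftrightarrow> (\<exists>b. 0 \<le> Re b \<and> \<phi> = (\<lambda>z. z + b))) \<and>
         (\<forall>b. 0 \<le> Re b \<and> \<phi> = (\<lambda>z. z + b) \<longrightarrow>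
              comp_opnorm lam beta \<phi> = exp (- lam 0 * Re b))"
proof -
  have lpos: "\<And>n. 0 < lam n"
    using lam1_pos strict_mono_less_eq[OF lam_mono, of 0] by (meson less_le_trans zero_le)
  have bpos: "\<And>n. 0 < beta n" using beta_pos by blast
  interpret D: dset lam beta
    using lpos lam_mono bpos summ_S[OF lpos bpos lam_log condE] by unfold_locales auto
  have conv: "\<exists>b. 0 \<le> Re b \<and> \<phi> = (\<lambda>z. z + b)" if cb: "comp_bounded lam beta \<phi>"
  proof -
    obtain C where C: "\<And>z. - C \<le> Re (\<phi> z - z)" using D.lower[OF cb] by blast
    define d where "d = (\<lambda>z. \<phi> z - z + of_real (C + 1))"
    have dre: "1 \<le> Re (d z)" for z unfolding d_def using C[of z] by simp
    have dnz: "d z \<noteq> 0" for z using dre[of z] by auto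
    define g where "g = (\<lambda>z. 1 / d z)"
    have hol: "g holomorphic_on UNIV"
      unfolding g_def d_def using dnz[unfolded d_def]
      by (intro holomorphic_intros entire) auto
    have "cmod (g z) \<le> 1" for z
    proof -
      have "1 \<le> cmod (d z)" using dre[of z] complex_Re_le_cmod[of "d z"] by linarith
      then show ?thesis unfolding g_def by (simp add: norm_divide divide_le_eq_1)
    qed
    then have "bounded (range g)" unfolding bounded_iff by blast
    from Liouville_theorem[OF hol this] obtain c where gc: "\<And>z. g z = c"
      unfolding constant_on_def by blast
    have "d z = d 0" for z
    proof -
      have e: "c * d z = 1" "c * d 0 = 1"
        using gc[of z] gc[of 0] dnz[of z] dnz[of 0] unfolding g_def by (auto simp: field_simps)
      then have "c \<noteq> 0" by auto
      with e show ?thesis by (metis mult_left_cancel)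
    qed
    note dd = this
    have "\<phi> z = z + \<phi> 0" for z
    proof -
      have "\<phi> z - z + of_real (C + 1) = \<phi> 0 - 0 + of_real (C + 1)"
        using dd[of z] unfolding d_def .
      then show ?thesis by (simp add: algebra_simps)
    qed
    then have phi0: "\<phi> = (\<lambda>z. z + \<phi> 0)" by (rule ext)
    obtain b where b: "b = \<phi> 0" by blast
    have phi: "\<phi> = (\<lambda>z. z + b)" using phi0 b by simp
    have cb2: "comp_bounded lam beta (\<lambda>z. z + b)" using cb phi by simp
    have "0 \<le> Re b" using D.reb[OF cb2 lam_inf] .
    then show ?thesis using phi by blast
  qed
  show ?thesis
  proof (intro conjI allI impI iffI)
    show "\<exists>b. 0 \<le> Re b \<and> \<phi> = (\<lambda>z. z + b)" if "comp_bounded lam beta \<phi>" using conv that .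
    show "comp_bounded lam beta \<phi>" if "\<exists>b. 0 \<le> Re b \<and> \<phi> = (\<lambda>z. z + b)"
    proof -
      from that obtain b where b: "0 \<le> Re b" "\<phi> = (\<lambda>z. z + b)" by blast
      show ?thesis using D.fwd[OF b(1)] unfolding b(2) by (rule conjunct1)
    qed
    show "comp_opnorm lam beta \<phi> = exp (- lam 0 * Re b)" if "0 \<le> Re b \<and> \<phi> = (\<lambda>z. z + b)" for b
    proof -
      from that have b: "0 \<le> Re b" "\<phi> = (\<lambda>z. z + b)" by auto
      show ?thesis using D.fwd[OF b(1)] unfolding b(2) by (rule conjunct2)
    qed
  qed
qed

end
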